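(* Let $\mathbf M$ be an $(N+1,k)$-admissible and micro-reversible matrix with core $\widetilde{\mathbf M}$ and characteristic triple $(\mu,\widetilde{\mathbf w},\widetilde{\mathbf z})$, let $\mathbf K:=\frac1\mu\operatorname{diag}(\widetilde{\mathbf w})^{-1}\widetilde{\mathbf M}^\dagger\operatorname{diag}(\widetilde{\mathbf w})$ and $\boldsymbol\pi:=\widetilde{\mathbf w}\circ\widetilde{\mathbf z}$. Let $\widetilde{\mathbf p}:[0,\infty)\to\mathbb R^{N+1-k}$ solve $\frac{d\widetilde{\mathbf p}}{dt}=(\widetilde{\mathbf M}-\mathbf I)\widetilde{\mathbf p}$ with $\widetilde{\mathbf p}(0)$ nonnegative and nonzero, and define $$\mathbf q(t):=\frac{\widetilde{\mathbf w}\circ\widetilde{\mathbf p}(t/\mu)}{\langle\widetilde{\mathbf w},\widetilde{\mathbf p}(t/\mu)\rangle},\qquad \mathbf Q(t):=\Big(\frac{q_i(t)}{\pi_i}\Big)_i .$$ Then $\langle\widetilde{\mathbf w},\widetilde{\mathbf p}(t)\rangle\neq0$ for all $t$, $\mathbf q$ solves $\frac{d\mathbf q}{dt}=(\mathbf K^\dagger-\mathbf I)\mathbf q$, $\mathbf Q$ solves $\frac{d\mathbf Q}{dt}=(\mathbf K-\mathbf I)\mathbf Q$, and $\langle\mathbf Q(t),\boldsymbol\pi\rangle=\langle\mathbf q(t),\mathbf 1\rangle=1$ for all $t$.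
   Context: Matrices are column-stochastic unless said otherwise; $\dagger$ is transpose, $\circ$ the entrywise product, $\operatorname{diag}(\mathbf a)$ the diagonal matrix with diagonal $\mathbf a$, $\mathbf 1$ the all-ones vector. For $1\le k<N-1$, an $(N+1)\times(N+1)$ column-stochastic $\mathbf M$ is $(N+1,k)$-admissible if, after a simultaneous permutation of rows and columns, $\mathbf M=\begin{pmatrix}\widetilde{\mathbf M}&\mathbf 0\\ \mathbf A&\mathbf I\end{pmatrix}$ with $\mathbf I$ the $k\times k$ identity, $\widetilde{\mathbf M}$ an irreducible $(N+1-k)\times(N+1-k)$ matrix (the core, acting on the transient states), and $\mathbf A$ a $k\times(N+1-k)$ matrix with no zero row. The characteristic triple $(\mu,\widetilde{\mathbf w},\widetilde{\mathbf z})$ consists of $\mu=\rho(\widetilde{\mathbf M})\in(0,1)$ and the positive left and right eigenvectors $\widetilde{\mathbf w},\widetilde{\mathbf z}$ of $\widetilde{\mathbf M}$ for $\mu$ normalised by $\langle\widetilde{\mathbf w},\mathbf 1\rangle=\langle\widetilde{\mathbf w},\widetilde{\mathbf z}\rangle=1$. $\mathbf M$ is micro-reversible if $\widetilde w_i\widetilde M_{ij}\widetilde z_j=\widetilde w_j\widetilde M_{ji}\widetilde z_i$ for all $i,j$. *)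

theory Defs
  imports "HOL-Analysis.Analysis"
begin

definition column_stochastic :: "real^'n^'n \<Rightarrow> bool" where
  "column_stochastic M \<longleftrightarrow>
     (\<forall>i j. 0 \<le> M $ i $ j) \<and> (\<forall>j. (\<Sum>i\<in>UNIV. M $ i $ j) = 1)"

definition irreducible_mat :: "real^'n^'n \<Rightarrow> bool" where
  "irreducible_mat M \<longleftrightarrow> (\<forall>i j. (i, j) \<in> {(a, b). M $ a $ b \<noteq> 0}\<^sup>+)"

definition cmat :: "real^'n^'n \<Rightarrow> complex^'n^'n" where
  "cmat M = (\<chi> i j. complex_of_real (M $ i $ j))"

definition spectral_radius_mat :: "real^'n^'n \<Rightarrow> real" where
  "spectral_radius_mat M =
     Max {cmod l | l. \<exists>v :: complex^'n. v \<noteq> 0 \<and> cmat M *v v = l *s v}"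

text \<open>The matrix M, indexed by transient states (Inl) followed by absorbing states (Inr),
  has the block form  [[Mcore, 0], [A, I]]  (already simultaneously permuted).\<close>
definition core :: "real^('t::finite + 'a::finite)^('t + 'a) \<Rightarrow> real^'t^'t" where
  "core M = (\<chi> i j. M $ Inl i $ Inl j)"

definition admissible :: "nat \<Rightarrow> nat \<Rightarrow> real^('t::finite + 'a::finite)^('t + 'a) \<Rightarrow> bool" where
  "admissible N k M \<longleftrightarrow>
     CARD('t + 'a) = N + 1 \<and> CARD('a) = k \<and> 1 \<le> k \<and> k < N - 1 \<and>
     column_stochastic M \<and>
     (\<forall>i b. M $ Inl i $ Inr b = 0) \<and>
     (\<forall>a b. M $ Inr a $ Inr b = (if a = b then 1 else 0)) \<and>
     irreducible_mat (core M) \<and>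
     (\<forall>a. \<exists>j. M $ Inr a $ Inl j \<noteq> 0)"

definition char_triple :: "real^'t^'t \<Rightarrow> real \<Rightarrow> real^'t \<Rightarrow> real^'t \<Rightarrow> bool" where
  "char_triple Mc \<mu> w z \<longleftrightarrow>
     \<mu> = spectral_radius_mat Mc \<and> 0 < \<mu> \<and> \<mu> < 1 \<and>
     (\<forall>i. 0 < w $ i) \<and> (\<forall>i. 0 < z $ i) \<and>
     transpose Mc *v w = \<mu> *\<^sub>R w \<and> Mc *v z = \<mu> *\<^sub>R z \<and>
     (\<Sum>i\<in>UNIV. w $ i) = 1 \<and> w \<bullet> z = 1"

definition micro_reversible :: "real^'t^'t \<Rightarrow> real^'t \<Rightarrow> real^'t \<Rightarrow> bool" where
  "micro_reversible Mc w z \<longleftrightarrow>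
     (\<forall>i j. w $ i * Mc $ i $ j * z $ j = w $ j * Mc $ j $ i * z $ i)"

end

theory Submission
  imports Defs
begin

lemma vd_comp:
  fixes f :: "real \<Rightarrow> real^'n"
  assumes "\<And>i. ((\<lambda>x. f x $ i) has_vector_derivative f' $ i) F"
  shows "(f has_vector_derivative f') F"
proof -
  have e: "f = (\<lambda>x. \<Sum>i\<in>UNIV. (f x $ i) *\<^sub>R axis i 1)"
    by (auto simp: fun_eq_iff vec_eq_iff sum_component axis_def if_distrib cong: if_cong)
  have e2: "f' = (\<Sum>i\<in>UNIV. (f' $ i) *\<^sub>R axis i 1)"
    by (auto simp: fun_eq_iff vec_eq_iff sum_component axis_def if_distrib cong: if_cong)
  have "((\<lambda>x. \<Sum>i\<in>UNIV. (f x $ i) *\<^sub>R axis i 1) has_vector_derivative (\<Sum>i\<in>UNIV. (f' $ i) *\<^sub>R axis i 1)) F"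
    by (intro has_vector_derivative_sum bounded_linear.has_vector_derivative[OF bounded_linear_scaleR_left] assms)
  then show ?thesis by (subst e, subst e2)
qed
lemma vd_nth:
  fixes f :: "real \<Rightarrow> real^'n"
  assumes "(f has_vector_derivative f') F"
  shows "((\<lambda>x. f x $ i) has_vector_derivative f' $ i) F"
  using bounded_linear.has_vector_derivative[OF bounded_linear_vec_nth assms] .



theorem lemma4:
  fixes M :: "real^('t::finite + 'a::finite)^('t + 'a)"
    and N k :: nat and \<mu> :: real and w z :: "real^'t"
    and p :: "real \<Rightarrow> real^'t"
    and K :: "real^'t^'t" and \<pi> :: "real^'t"
    and q Q :: "real \<Rightarrow> real^'t"
  assumes adm: "admissible N k M"
    and triple: "char_triple (core M) \<mu> w z"
    and mrev: "micro_reversible (core M) w z"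
    and K_def: "K = (\<chi> i j. (1 / \<mu>) * (w $ j / w $ i) * core M $ j $ i)"
    and pi_def: "\<pi> = (\<chi> i. w $ i * z $ i)"
    and ode: "\<And>t. t \<ge> 0 \<Longrightarrow>
               (p has_vector_derivative ((core M - mat 1) *v p t)) (at t within {0..})"
    and p0_nonneg: "\<And>i. p 0 $ i \<ge> 0"
    and p0_nonzero: "p 0 \<noteq> 0"
    and q_def: "\<And>t. q t = (\<chi> i. w $ i * p (t / \<mu>) $ i) /\<^sub>R (w \<bullet> p (t / \<mu>))"
    and Q_def: "\<And>t. Q t = (\<chi> i. q t $ i / \<pi> $ i)"
  shows "(\<forall>t\<ge>0. w \<bullet> p t \<noteq> 0)
       \<and> (\<forall>t\<ge>0. (q has_vector_derivative ((transpose K - mat 1) *v q t)) (at t within {0..}))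
       \<and> (\<forall>t\<ge>0. (Q has_vector_derivative ((K - mat 1) *v Q t)) (at t within {0..}))
       \<and> (\<forall>t\<ge>0. Q t \<bullet> \<pi> = 1 \<and> (\<Sum>i\<in>UNIV. q t $ i) = 1)"
proof -
  define Mc where "Mc = core M"
  define S where "S = (\<lambda>s. w \<bullet> p s)"
  have mu: "0 < \<mu>" and wpos: "\<And>i. 0 < w $ i" and zpos: "\<And>i. 0 < z $ i"
    and tM: "transpose Mc *v w = \<mu> *\<^sub>R w" and wsum: "(\<Sum>i\<in>UNIV. w $ i) = 1"
    using triple by (auto simp: char_triple_def Mc_def)
  have mr: "\<And>i j. w $ i * Mc $ i $ j * z $ j = w $ j * Mc $ j $ i * z $ i"
    using mrev by (simp add: micro_reversible_def Mc_def)
  have wne: "\<And>i. w $ i \<noteq> 0" using wpos by (metis less_irrefl)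
  have zne: "\<And>i. z $ i \<noteq> 0" using zpos by (metis less_irrefl)
  have key: "\<And>x. w \<bullet> ((Mc - mat 1) *v x) = (\<mu> - 1) * (w \<bullet> x)"
  proof -
    fix x
    have "w \<bullet> (Mc *v x) = (transpose Mc *v w) \<bullet> x"
      by (simp add: transpose_matrix_vector dot_lmul_matrix)
    also have "\<dots> = \<mu> * (w \<bullet> x)" using tM by simp
    finally show "w \<bullet> ((Mc - mat 1) *v x) = (\<mu> - 1) * (w \<bullet> x)"
      by (simp add: matrix_vector_mult_diff_rdistrib inner_diff_right algebra_simps)
  qed
  have ode': "\<And>t. t \<ge> 0 \<Longrightarrow> (p has_vector_derivative ((Mc - mat 1) *v p t)) (at t within {0..})"
    using ode by (simp add: Mc_def)
  have Sder: "(S has_real_derivative (\<mu> - 1) * S s) (at s within {0..})" if "s \<ge> 0" for s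
  proof -
    have "(S has_vector_derivative w \<bullet> ((Mc - mat 1) *v p s)) (at s within {0..})"
      unfolding S_def by (rule bounded_linear.has_vector_derivative[OF bounded_linear_inner_right ode'[OF that]])
    then show ?thesis by (simp add: key S_def has_real_derivative_iff_has_vector_derivative)
  qed
  have Sexp: "S s = exp ((\<mu> - 1) * s) * S 0" if "s \<ge> 0" for s
  proof -
    define f where "f = (\<lambda>s. exp (- (\<mu> - 1) * s) * S s)"
    have "(f has_field_derivative 0) (at x within {0..})" if "x \<in> {0..}" for x
    proof -
      have "(f has_field_derivative (exp (- (\<mu> - 1) * x) * (- (\<mu> - 1)) * S x + exp (- (\<mu> - 1) * x) * ((\<mu> - 1) * S x))) (at x within {0..})"
        unfolding f_def using that
        by (auto intro!: derivative_eq_intros Sder)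
      then show ?thesis by (simp add: algebra_simps)
    qed
    then obtain c where c: "\<And>x. x \<in> {0..} \<Longrightarrow> f x = c"
      using has_field_derivative_zero_constant[of "{0::real..}" f] by (auto simp: convex_real_interval)
    have fs: "f s = S 0" using c[of s] c[of 0] that by (simp add: f_def)
    have e1: "exp ((\<mu> - 1) * s) * exp (- (\<mu> - 1) * s) = 1" by (simp add: algebra_simps flip: exp_add)
    have "S s = exp ((\<mu> - 1) * s) * f s" unfolding f_def by (simp only: mult.assoc[symmetric] e1 mult_1_left)
    then show ?thesis using fs by simp
  qed
  have S0: "S 0 > 0"
  proof -
    obtain i where i: "p 0 $ i \<noteq> 0" using p0_nonzero by (auto simp: vec_eq_iff)
    have "S 0 = (\<Sum>j\<in>UNIV. w $ j * p 0 $ j)" by (simp add: S_def inner_vec_def)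
    also have "\<dots> > 0"
      proof (rule sum_pos2[of UNIV i])
      have "p 0 $ i > 0" using i p0_nonneg[of i] by linarith
      then show "0 < w $ i * p 0 $ i" using wpos[of i] by simp
      show "\<And>j. j \<in> UNIV \<Longrightarrow> 0 \<le> w $ j * p 0 $ j" using wpos p0_nonneg by (simp add: less_imp_le)
    qed simp_all
    finally show ?thesis .
  qed
  have Spos: "S s > 0" if "s \<ge> 0" for s using Sexp[OF that] S0 by simp
  have part1: "\<forall>t\<ge>0. w \<bullet> p t \<noteq> 0" using Spos unfolding S_def by (metis less_irrefl)
  have Pder: "((\<lambda>t. p (t / \<mu>)) has_vector_derivative (1 / \<mu>) *\<^sub>R ((Mc - mat 1) *v p (t / \<mu>))) (at t within {0..})"
    if "t \<ge> 0" for t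
  proof -
    have d1: "((\<lambda>t. t / \<mu>) has_vector_derivative (1 / \<mu>)) (at t within {0..})"
      unfolding has_real_derivative_iff_has_vector_derivative[symmetric]
      using mu by (auto intro!: derivative_eq_intros)
    have sub: "(\<lambda>t. t / \<mu>) ` {0..} \<subseteq> {0..}" using mu by auto
    have d2: "(p has_vector_derivative ((Mc - mat 1) *v p (t / \<mu>))) (at (t / \<mu>) within (\<lambda>t. t / \<mu>) ` {0..})"
      by (rule has_vector_derivative_within_subset[OF ode' sub]) (use that mu in simp)
    show ?thesis using vector_diff_chain_within[OF d1 d2] by (simp add: o_def)
  qed
  have Pi: "((\<lambda>t. p (t / \<mu>) $ i) has_real_derivative (1 / \<mu>) * (((Mc - mat 1) *v p (t / \<mu>)) $ i)) (at t within {0..})"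
    if "t \<ge> 0" for t i
    using vd_nth[OF Pder[OF that], of i] by (simp add: has_real_derivative_iff_has_vector_derivative)
  have G: "((\<lambda>t. S (t / \<mu>)) has_real_derivative (1 / \<mu>) * ((\<mu> - 1) * S (t / \<mu>))) (at t within {0..})"
    if "t \<ge> 0" for t
    using bounded_linear.has_vector_derivative[OF bounded_linear_inner_right Pder[OF that], of w]
    by (simp add: has_real_derivative_iff_has_vector_derivative S_def key)
  have Mi: "((Mc - mat 1) *v x) $ i = (\<Sum>j\<in>UNIV. Mc $ i $ j * x $ j) - x $ i" for x i
  proof -
    have "(Mc - mat 1) *v x = Mc *v x - x" by (simp add: matrix_vector_mult_diff_rdistrib)
    then show ?thesis unfolding matrix_vector_mult_def by simp
  qed
  have qc: "q t $ i = w $ i * p (t / \<mu>) $ i / S (t / \<mu>)" for t i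
    using q_def[of t] by (simp add: S_def divide_inverse mult.commute)
  have Qc: "Q t $ i = (1 / z $ i) * p (t / \<mu>) $ i / S (t / \<mu>)" for t i
    using Q_def[of t] wne[of i] by (simp add: qc pi_def)
  have Dgen: "((\<lambda>x. c * p (x / \<mu>) $ i / S (x / \<mu>)) has_vector_derivative
      c * (1 / \<mu>) * (\<Sum>j\<in>UNIV. Mc $ i $ j * p (t / \<mu>) $ j) / S (t / \<mu>) - c * p (t / \<mu>) $ i / S (t / \<mu>))
      (at t within {0..})" if "t \<ge> 0" for t c i
  proof -
    have s0: "t / \<mu> \<ge> 0" using that mu by simp
    have Sne: "S (t / \<mu>) \<noteq> 0" using Spos[OF s0] by simp
    have "((\<lambda>x. c * p (x / \<mu>) $ i / S (x / \<mu>)) has_real_derivative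
      ((c * ((1 / \<mu>) * (((Mc - mat 1) *v p (t / \<mu>)) $ i))) * S (t / \<mu>)
        - ((1 / \<mu>) * ((\<mu> - 1) * S (t / \<mu>))) * (c * p (t / \<mu>) $ i)) / (S (t / \<mu>) ^ Suc (Suc 0)))
      (at t within {0..})"
      by (rule DERIV_quotient[OF DERIV_cmult[OF Pi[OF that, of i]] G[OF that] Sne])
    moreover have "((c * ((1 / \<mu>) * (((Mc - mat 1) *v p (t / \<mu>)) $ i))) * S (t / \<mu>)
        - ((1 / \<mu>) * ((\<mu> - 1) * S (t / \<mu>))) * (c * p (t / \<mu>) $ i)) / (S (t / \<mu>) ^ Suc (Suc 0))
      = c * (1 / \<mu>) * (\<Sum>j\<in>UNIV. Mc $ i $ j * p (t / \<mu>) $ j) / S (t / \<mu>) - c * p (t / \<mu>) $ i / S (t / \<mu>)"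
      unfolding Mi using Sne mu by (simp add: field_simps power2_eq_square)
    ultimately show ?thesis by (simp add: has_real_derivative_iff_has_vector_derivative)
  qed
  have Kc: "K $ a $ b = (1 / \<mu>) * (w $ b / w $ a) * Mc $ b $ a" for a b by (simp add: K_def Mc_def)
  have mvc: "((A - mat 1) *v x) $ i = (\<Sum>j\<in>UNIV. A $ i $ j * x $ j) - x $ i" for A :: "real^'t^'t" and x i
  proof -
    have "(A - mat 1) *v x = A *v x - x" by (simp add: matrix_vector_mult_diff_rdistrib)
    then show ?thesis unfolding matrix_vector_mult_def by simp
  qed
  have part2: "\<forall>t\<ge>0. (q has_vector_derivative ((transpose K - mat 1) *v q t)) (at t within {0..})"
  proof (intro allI impI vd_comp)
    fix t :: real and i assume t: "t \<ge> 0"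
    have fq: "(\<lambda>x. q x $ i) = (\<lambda>x. w $ i * p (x / \<mu>) $ i / S (x / \<mu>))" using qc by auto
    have "(\<Sum>j\<in>UNIV. transpose K $ i $ j * q t $ j) = w $ i * (1 / \<mu>) * (\<Sum>j\<in>UNIV. Mc $ i $ j * p (t / \<mu>) $ j) / S (t / \<mu>)"
      unfolding sum_distrib_left sum_divide_distrib
      by (rule sum.cong) (use wne in \<open>auto simp: Kc qc transpose_def\<close>)
    then have "((transpose K - mat 1) *v q t) $ i = w $ i * (1 / \<mu>) * (\<Sum>j\<in>UNIV. Mc $ i $ j * p (t / \<mu>) $ j) / S (t / \<mu>) - w $ i * p (t / \<mu>) $ i / S (t / \<mu>)"
      by (simp add: mvc qc)
    then show "((\<lambda>x. q x $ i) has_vector_derivative ((transpose K - mat 1) *v q t) $ i) (at t within {0..})"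
      using Dgen[OF t, of "w $ i" i] by (simp add: fq)
  qed
  have part3: "\<forall>t\<ge>0. (Q has_vector_derivative ((K - mat 1) *v Q t)) (at t within {0..})"
  proof (intro allI impI vd_comp)
    fix t :: real and i assume t: "t \<ge> 0"
    have fQ: "(\<lambda>x. Q x $ i) = (\<lambda>x. (1 / z $ i) * p (x / \<mu>) $ i / S (x / \<mu>))" using Qc by auto
    have "(\<Sum>j\<in>UNIV. K $ i $ j * Q t $ j) = (1 / z $ i) * (1 / \<mu>) * (\<Sum>j\<in>UNIV. Mc $ i $ j * p (t / \<mu>) $ j) / S (t / \<mu>)"
      unfolding sum_distrib_left sum_divide_distrib
    proof (rule sum.cong)
      fix j
      have e: "w $ j * Mc $ j $ i / (w $ i * z $ j) = Mc $ i $ j / z $ i"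
        using mr[of i j] wne zne by (simp add: field_simps)
      have "K $ i $ j * Q t $ j = (1 / \<mu>) * (w $ j * Mc $ j $ i / (w $ i * z $ j)) * p (t / \<mu>) $ j / S (t / \<mu>)"
        by (simp add: Kc Qc)
      also have "\<dots> = (1 / \<mu>) * (Mc $ i $ j / z $ i) * p (t / \<mu>) $ j / S (t / \<mu>)" by (simp only: e)
      finally show "K $ i $ j * Q t $ j = 1 / z $ i * (1 / \<mu>) * (Mc $ i $ j * p (t / \<mu>) $ j) / S (t / \<mu>)"
        by simp
    qed simp
    then have "((K - mat 1) *v Q t) $ i = (1 / z $ i) * (1 / \<mu>) * (\<Sum>j\<in>UNIV. Mc $ i $ j * p (t / \<mu>) $ j) / S (t / \<mu>) - (1 / z $ i) * p (t / \<mu>) $ i / S (t / \<mu>)"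
      by (simp add: mvc Qc)
    then show "((\<lambda>x. Q x $ i) has_vector_derivative ((K - mat 1) *v Q t) $ i) (at t within {0..})"
      using Dgen[OF t, of "1 / z $ i" i] by (simp add: fQ)
  qed
  have part4: "\<forall>t\<ge>0. Q t \<bullet> \<pi> = 1 \<and> (\<Sum>i\<in>UNIV. q t $ i) = 1"
  proof (intro allI impI)
    fix t :: real assume t: "t \<ge> 0"
    have s0: "t / \<mu> \<ge> 0" using t mu by simp
    have Sne: "S (t / \<mu>) \<noteq> 0" using Spos[OF s0] by simp
    have sq: "(\<Sum>i\<in>UNIV. q t $ i) = 1"
    proof -
      have "(\<Sum>i\<in>UNIV. q t $ i) = (\<Sum>i\<in>UNIV. w $ i * p (t / \<mu>) $ i) / S (t / \<mu>)"
        by (simp add: qc sum_divide_distrib)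
      also have "\<dots> = 1" using Sne by (simp add: S_def inner_vec_def)
      finally show ?thesis .
    qed
    have "Q t \<bullet> \<pi> = (\<Sum>i\<in>UNIV. q t $ i)"
      unfolding inner_vec_def
      by (rule sum.cong) (use wne zne in \<open>simp_all add: Q_def pi_def\<close>)
    with sq show "Q t \<bullet> \<pi> = 1 \<and> (\<Sum>i\<in>UNIV. q t $ i) = 1" by simp
  qed
  show ?thesis using part1 part2 part3 part4 by blast
qed

end
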